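(* If the filtered vector space $(V,\ell)$ satisfies the best approximation property, then every subspace $W\le V$ has an $\ell$-orthogonal complement, i.e. a subspace $X\le V$ with $W\oplus X=V$ and $\ell(w+x)=\max\{\ell(w),\ell(x)\}$ for all $w\in W$, $x\in X$.
   Context: A filtered vector space over a field $\kappa$ is a pair $(V,\ell)$ with $V$ a $\kappa$-vector space and $\ell\colon V\to\mathbb{R}\cup\{-\infty\}$ such that $\ell(v)=-\infty$ iff $v=0$, $\ell(cv)=\ell(v)$ for $c\in\kappa\setminus\{0\}$, and $\ell(v+w)\le\max\{\ell(v),\ell(w)\}$. $(V,\ell)$ satisfies the best approximation property if for every proper subspace $W\subsetneq V$ and every $v\in V\setminus W$ there is $w_0\in W$ with $\ell(v-w_0)\le\ell(v-w)$ for all $w\in W$. *)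

theory Defs
  imports Main "HOL-Library.Extended_Real"
begin

definition filtered_vector_space ::
  "('k::field \<Rightarrow> 'v::ab_group_add \<Rightarrow> 'v) \<Rightarrow> ('v \<Rightarrow> ereal) \<Rightarrow> bool" where
  "filtered_vector_space scale ell \<longleftrightarrow>
     vector_space scale \<and>
     (\<forall>v. ell v \<noteq> \<infinity>) \<and>
     (\<forall>v. ell v = - \<infinity> \<longleftrightarrow> v = 0) \<and>
     (\<forall>c v. c \<noteq> 0 \<longrightarrow> ell (scale c v) = ell v) \<and>
     (\<forall>v w. ell (v + w) \<le> max (ell v) (ell w))"

definition best_approximation_property ::
  "('k::field \<Rightarrow> 'v::ab_group_add \<Rightarrow> 'v) \<Rightarrow> ('v \<Rightarrow> ereal) \<Rightarrow> bool" where
  "best_approximation_property scale ell \<longleftrightarrow>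
     (\<forall>W v. module.subspace scale W \<and> W \<noteq> UNIV \<and> v \<notin> W \<longrightarrow>
        (\<exists>w0\<in>W. \<forall>w\<in>W. ell (v - w0) \<le> ell (v - w)))"

end

theory Submission
  imports Defs
begin

lemma fvs_neg:
  assumes "filtered_vector_space scale ell"
  shows "ell (- v) = ell v"
proof -
  interpret vs: vector_space scale using assms by (simp add: filtered_vector_space_def)
  have "scale (-1) v = - v" by (simp add: vs.scale_minus_left)
  moreover have "(-1::'a) \<noteq> 0" by simp
  ultimately show ?thesis using assms unfolding filtered_vector_space_def by metis
qed

lemma fvs_strict:
  assumes F: "filtered_vector_space scale ell" and lt: "ell a < ell b"
  shows "ell (a + b) = ell b"
proof -
  have ub: "\<And>v w. ell (v + w) \<le> max (ell v) (ell w)" using F by (simp add: filtered_vector_space_def)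
  have 1: "ell (a + b) \<le> ell b" using ub[of a b] lt by simp
  have "ell b \<le> max (ell (a + b)) (ell (- a))" using ub[of "a + b" "- a"] by simp
  hence "ell b \<le> max (ell (a + b)) (ell a)" using fvs_neg[OF F] by simp
  hence "ell b \<le> ell (a + b)" using lt by (auto simp: max_def split: if_splits)
  with 1 show ?thesis by simp
qed

lemma fvs_orth:
  assumes F: "filtered_vector_space scale ell"
    and U: "module.subspace scale U"
    and y: "\<forall>u\<in>U. ell y \<le> ell (y - u)"
    and u: "u \<in> U" and c: "c \<noteq> 0"
  shows "ell (scale c y + u) = max (ell y) (ell u)"
proof -
  interpret vs: vector_space scale using F by (simp add: filtered_vector_space_def)
  have sc: "\<And>c v. c \<noteq> 0 \<Longrightarrow> ell (scale c v) = ell v" using F by (simp add: filtered_vector_space_def)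
  have ub: "\<And>v w. ell (v + w) \<le> max (ell v) (ell w)" using F by (simp add: filtered_vector_space_def)
  have eq: "scale c y + u = scale c (y - scale (- inverse c) u)"
    using c by (simp add: vs.scale_right_diff_distrib vs.scale_minus_left vs.scale_right_distrib)
  have "scale (- inverse c) u \<in> U" using U u by (rule vs.subspace_scale)
  hence "ell y \<le> ell (y - scale (- inverse c) u)" using y by blast
  hence ge: "ell y \<le> ell (scale c y + u)" using eq sc[OF c] by metis
  show ?thesis
  proof (cases "ell y < ell u")
    case True
    hence "ell (scale c y) < ell u" using sc[OF c] by simp
    from fvs_strict[OF F this] True show ?thesis by simp
  next
    case False
    have "ell (scale c y + u) \<le> max (ell y) (ell u)" using ub[of "scale c y" u] sc[OF c] by simp
    with ge False show ?thesis by (simp add: max_def)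
  qed
qed

theorem corollary3p9:
  fixes scale :: "'k::field \<Rightarrow> 'v::ab_group_add \<Rightarrow> 'v"
    and ell :: "'v \<Rightarrow> ereal"
  assumes "filtered_vector_space scale ell"
    and "best_approximation_property scale ell"
    and "module.subspace scale W"
  shows "\<exists>X. module.subspace scale X \<and> W \<inter> X = {0} \<and>
             (\<forall>v. \<exists>w\<in>W. \<exists>x\<in>X. v = w + x) \<and>
             (\<forall>w\<in>W. \<forall>x\<in>X. ell (w + x) = max (ell w) (ell x))"
proof -
  note F = assms(1)
  interpret vs: vector_space scale using F by (simp add: filtered_vector_space_def)
  note WS = assms(3)
  define A where "A = {X. vs.subspace X \<and> W \<inter> X = {0} \<and>
             (\<forall>w\<in>W. \<forall>x\<in>X. ell (w + x) = max (ell w) (ell x))}"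
  have z: "ell 0 = - \<infinity>" using F by (simp add: filtered_vector_space_def)
  have "{0} \<in> A" unfolding A_def using WS vs.subspace_0[OF WS]
    by (auto simp: vs.subspace_def z)
  hence Ane: "A \<noteq> {}" by blast
  have "\<exists>M\<in>A. \<forall>X\<in>A. M \<subseteq> X \<longrightarrow> X = M"
  proof (rule subset_Zorn_nonempty[OF Ane])
    fix C assume Cne: "C \<noteq> {}" and ch: "subset.chain A C"
    have CA: "C \<subseteq> A" and cc: "\<And>X Y. X \<in> C \<Longrightarrow> Y \<in> C \<Longrightarrow> X \<subseteq> Y \<or> Y \<subseteq> X"
      using ch by (auto simp: subset.chain_def)
    have sub: "vs.subspace (\<Union>C)"
      unfolding vs.subspace_def
    proof (intro conjI ballI allI)
      show "0 \<in> \<Union>C" using Cne CA by (auto simp: A_def vs.subspace_def)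
    next
      fix x y assume "x \<in> \<Union>C" "y \<in> \<Union>C"
      then obtain X Y where "X \<in> C" "Y \<in> C" "x \<in> X" "y \<in> Y" by blast
      have "X \<subseteq> Y \<or> Y \<subseteq> X" using cc \<open>X \<in> C\<close> \<open>Y \<in> C\<close> by blast
      then obtain Z where Z: "Z \<in> C" "x \<in> Z" "y \<in> Z"
        using \<open>X \<in> C\<close> \<open>Y \<in> C\<close> \<open>x \<in> X\<close> \<open>y \<in> Y\<close> by blast
      hence "vs.subspace Z" using CA by (auto simp: A_def)
      hence "x + y \<in> Z" using Z vs.subspace_add by blast
      thus "x + y \<in> \<Union>C" using Z by blast
    next
      fix c x assume "x \<in> \<Union>C"
      then obtain X where "X \<in> C" "x \<in> X" by blast
      moreover have "vs.subspace X" using CA \<open>X \<in> C\<close> by (auto simp: A_def)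
      ultimately show "scale c x \<in> \<Union>C" using vs.subspace_scale by blast
    qed
    have i: "W \<inter> \<Union>C = {0}"
    proof -
      have "W \<inter> X = {0}" if "X \<in> C" for X using that CA by (auto simp: A_def)
      thus ?thesis using Cne by blast
    qed
    have o: "\<forall>w\<in>W. \<forall>x\<in>\<Union>C. ell (w + x) = max (ell w) (ell x)"
    proof (intro ballI)
      fix w x assume "w \<in> W" "x \<in> \<Union>C"
      then obtain X where "X \<in> C" "x \<in> X" by blast
      thus "ell (w + x) = max (ell w) (ell x)" using CA \<open>w \<in> W\<close> by (auto simp: A_def)
    qed
    show "\<Union>C \<in> A" unfolding A_def using sub i o by blast
  qed
  then obtain M where MA: "M \<in> A" and Mmax: "\<forall>X\<in>A. M \<subseteq> X \<longrightarrow> X = M" by blast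
  have Msub: "vs.subspace M" and MW: "W \<inter> M = {0}"
    and Mo: "\<forall>w\<in>W. \<forall>x\<in>M. ell (w + x) = max (ell w) (ell x)" using MA by (auto simp: A_def)
  define U where "U = {w + x | w x. w \<in> W \<and> x \<in> M}"
  have Usub: "vs.subspace U" unfolding vs.subspace_def U_def
  proof (intro conjI ballI allI)
    show "0 \<in> {w + x |w x. w \<in> W \<and> x \<in> M}"
      using vs.subspace_0[OF WS] vs.subspace_0[OF Msub] by force
  next
    fix a b assume "a \<in> {w + x |w x. w \<in> W \<and> x \<in> M}" "b \<in> {w + x |w x. w \<in> W \<and> x \<in> M}"
    then obtain w1 x1 w2 x2 where "a = w1 + x1" "b = w2 + x2" "w1 \<in> W" "x1 \<in> M" "w2 \<in> W" "x2 \<in> M" by blast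
    moreover have "a + b = (w1 + w2) + (x1 + x2)" using calculation by (simp add: algebra_simps)
    ultimately show "a + b \<in> {w + x |w x. w \<in> W \<and> x \<in> M}"
      using vs.subspace_add[OF WS] vs.subspace_add[OF Msub] by blast
  next
    fix c a assume "a \<in> {w + x |w x. w \<in> W \<and> x \<in> M}"
    then obtain w1 x1 where "a = w1 + x1" "w1 \<in> W" "x1 \<in> M" by blast
    then show "scale c a \<in> {w + x |w x. w \<in> W \<and> x \<in> M}"
      using vs.subspace_scale[OF WS] vs.subspace_scale[OF Msub]
      by (auto simp: vs.scale_right_distrib) blast
  qed
  have "U = UNIV"
  proof (rule ccontr)
    assume ne: "U \<noteq> UNIV"
    then obtain v where v: "v \<notin> U" by blast
    from assms(2) Usub ne v obtain u0 where u0: "u0 \<in> U" and best: "\<forall>u\<in>U. ell (v - u0) \<le> ell (v - u)"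
      unfolding best_approximation_property_def by blast
    define y where "y = v - u0"
    have yorth: "\<forall>u\<in>U. ell y \<le> ell (y - u)"
    proof
      fix u assume "u \<in> U"
      hence "u0 + u \<in> U" using vs.subspace_add[OF Usub u0] by blast
      with best have "ell (v - u0) \<le> ell (v - (u0 + u))" by blast
      thus "ell y \<le> ell (y - u)" by (simp add: y_def algebra_simps)
    qed
    have yU: "y \<notin> U"
    proof
      assume "y \<in> U"
      hence "y + u0 \<in> U" using vs.subspace_add[OF Usub _ u0] by blast
      thus False using v by (simp add: y_def)
    qed
    have MU: "M \<subseteq> U" unfolding U_def using vs.subspace_0[OF WS] by force
    have WU: "W \<subseteq> U" unfolding U_def using vs.subspace_0[OF Msub] by force
    define X where "X = {x + scale c y | x c. x \<in> M}"
    have Xsub: "vs.subspace X" unfolding vs.subspace_def X_def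
    proof (intro conjI ballI allI)
      show "0 \<in> {x + scale c y |x c. x \<in> M}"
        using vs.subspace_0[OF Msub] by (auto intro!: exI[of _ 0])
    next
      fix a b assume "a \<in> {x + scale c y |x c. x \<in> M}" "b \<in> {x + scale c y |x c. x \<in> M}"
      then obtain x1 c1 x2 c2 where "a = x1 + scale c1 y" "b = x2 + scale c2 y" "x1 \<in> M" "x2 \<in> M" by blast
      moreover have "x1 + scale c1 y + (x2 + scale c2 y) = (x1 + x2) + scale (c1 + c2) y"
        by (simp add: vs.scale_left_distrib algebra_simps)
      ultimately show "a + b \<in> {x + scale c y |x c. x \<in> M}"
        using vs.subspace_add[OF Msub] by blast
    next
      fix c a assume "a \<in> {x + scale c y |x c. x \<in> M}"
      then obtain x1 c1 where "a = x1 + scale c1 y" "x1 \<in> M" by blast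
      moreover have "scale c (x1 + scale c1 y) = scale c x1 + scale (c * c1) y"
        by (simp add: vs.scale_right_distrib)
      ultimately show "scale c a \<in> {x + scale c y |x c. x \<in> M}"
        using vs.subspace_scale[OF Msub] by blast
    qed
    have XW: "W \<inter> X = {0}"
    proof -
      have "a = 0" if "a \<in> W" "a \<in> X" for a
      proof -
        from that obtain x c where x: "x \<in> M" and a: "a = x + scale c y" unfolding X_def by blast
        show ?thesis
        proof (cases "c = 0")
          case True
          then show ?thesis using a x that MW by auto
        next
          case False
          have "scale c y = a - x" using a by simp
          moreover have "a - x \<in> U" using vs.subspace_diff[OF Usub] that(1) x WU MU by blast
          ultimately have "scale (inverse c) (scale c y) \<in> U" using vs.subspace_scale[OF Usub] by metis
          hence "y \<in> U" using False by simp
          with yU show ?thesis by simp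
        qed
      qed
      moreover have "0 \<in> W" "0 \<in> X" using vs.subspace_0[OF WS] vs.subspace_0[OF Xsub] by auto
      ultimately show ?thesis by blast
    qed
    have Xo: "\<forall>w\<in>W. \<forall>a\<in>X. ell (w + a) = max (ell w) (ell a)"
    proof (intro ballI)
      fix w a assume w: "w \<in> W" and "a \<in> X"
      then obtain x c where x: "x \<in> M" and a: "a = x + scale c y" unfolding X_def by blast
      show "ell (w + a) = max (ell w) (ell a)"
      proof (cases "c = 0")
        case True
        then show ?thesis using a x w Mo by auto
      next
        case False
        have wx: "w + x \<in> U" using w x U_def by blast
        have "ell (w + a) = ell (scale c y + (w + x))" using a by (simp add: algebra_simps)
        also have "\<dots> = max (ell y) (ell (w + x))" using fvs_orth[OF F Usub yorth wx False] .
        also have "\<dots> = max (ell y) (max (ell w) (ell x))" using Mo w x by simp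
        finally have 1: "ell (w + a) = max (ell y) (max (ell w) (ell x))" .
        have "ell a = ell (scale c y + x)" using a by (simp add: algebra_simps)
        also have "\<dots> = max (ell y) (ell x)" using fvs_orth[OF F Usub yorth _ False] x MU by blast
        finally show ?thesis using 1 by (simp add: max.assoc max.left_commute max.commute)
      qed
    qed
    have XA: "X \<in> A" using Xsub XW Xo by (simp add: A_def)
    have "M \<subseteq> X" unfolding X_def by (force intro: exI[of _ 0])
    hence "X = M" using Mmax XA by blast
    moreover have "y \<in> X" unfolding X_def using vs.subspace_0[OF Msub]
      by (auto intro!: exI[of _ 0] exI[of _ 1])
    ultimately show False using yU MU by blast
  qed
  hence "\<forall>v. \<exists>w\<in>W. \<exists>x\<in>M. v = w + x" unfolding U_def by blast
  thus ?thesis using Msub MW Mo by blast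
qed

end
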